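(* For a nondegenerate m-triangle, the torque $\mathbf t_1$ of the gravitational forces at $P_1$ with respect to the center of mass vanishes if and only if $r_{12}=r_{13}$, and all three torques $\mathbf t_1,\mathbf t_2,\mathbf t_3$ vanish if and only if the triangle is equilateral.
   Context: Masses $m_1,m_2,m_3>0$, $m_1+m_2+m_3=1$; position vectors $\mathbf a_i=\overrightarrow{OP_i}$ with $\sum m_i\mathbf a_i=0$; $r_{ij}=|\mathbf a_i-\mathbf a_j|$; $\mathbf t_i=\mathbf a_i\times\sum_{j\ne i}\frac{m_im_j}{r_{ij}^3}(\mathbf a_j-\mathbf a_i)$; nondegenerate means $P_1,P_2,P_3$ are not collinear. *)

theory Defs
  imports "HOL-Analysis.Analysis" "HOL-Analysis.Cross3"
begin

text \<open>Three bodies indexed by 1, 2, 3. Masses m i, position vectors a i in R^3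
  (relative to the origin O, which is the centre of mass).\<close>

definition rdist :: "(nat \<Rightarrow> real^3) \<Rightarrow> nat \<Rightarrow> nat \<Rightarrow> real" where
  "rdist a i j = norm (a i - a j)"

definition torque :: "(nat \<Rightarrow> real) \<Rightarrow> (nat \<Rightarrow> real^3) \<Rightarrow> nat \<Rightarrow> real^3" where
  "torque m a i = cross3 (a i)
     (\<Sum>j\<in>{1,2,3} - {i}. ((m i * m j) / (rdist a i j) ^ 3) *\<^sub>R (a j - a i))"

end

theory Submission
  imports Defs
begin

lemma key:
  fixes p q s :: "real^3" and mp mq ms :: real
  assumes mp: "mp > 0" and mq: "mq > 0" and ms: "ms > 0"
    and cm: "mp *\<^sub>R p + mq *\<^sub>R q + ms *\<^sub>R s = 0"
    and nc: "\<not> collinear {p, q, s}"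
  shows "cross3 p (((mp * mq) / norm (p - q) ^ 3) *\<^sub>R (q - p) + ((mp * ms) / norm (p - s) ^ 3) *\<^sub>R (s - p)) = 0
         \<longleftrightarrow> norm (p - q) = norm (p - s)"
proof -
  have mpp: "mp *\<^sub>R p = - (mq *\<^sub>R q) - ms *\<^sub>R s"
  proof -
    have "mp *\<^sub>R p = (mp *\<^sub>R p + mq *\<^sub>R q + ms *\<^sub>R s) - mq *\<^sub>R q - ms *\<^sub>R s"
      by (simp add: algebra_simps)
    then show ?thesis using cm by simp
  qed
  have pe: "p = - (mq / mp) *\<^sub>R q - (ms / mp) *\<^sub>R s"
  proof -
    have "p = (1 / mp) *\<^sub>R (mp *\<^sub>R p)" using mp by simp
    also have "\<dots> = - (mq / mp) *\<^sub>R q - (ms / mp) *\<^sub>R s"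
      unfolding mpp by (simp add: scaleR_diff_right)
    finally show ?thesis .
  qed
  have pq: "cross3 p q = (ms / mp) *\<^sub>R cross3 q s"
    by (subst pe) (simp add: Cross3.left_diff_distrib cross_mult_left cross_skew[of s q])
  have ps: "cross3 p s = - (mq / mp) *\<^sub>R cross3 q s"
    by (subst pe) (simp add: Cross3.left_diff_distrib cross_mult_left)
  have qs: "cross3 q s \<noteq> 0"
  proof
    assume h: "cross3 q s = 0"
    have "cross3 (p - q) (s - q) = cross3 p s - cross3 p q - cross3 q s"
      by (simp add: Cross3.left_diff_distrib Cross3.right_diff_distrib cross_skew[of q s])
    also have "\<dots> = 0" using pq ps h by simp
    finally have "collinear {0, p - q, s - q}" by (simp add: cross_eq_0)
    then have "collinear {p, q, s}"
      using collinear_3[of p q s] by simp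
    with nc show False by simp
  qed
  have "p \<noteq> q"
  proof
    assume "p = q" then have "{p, q, s} = {q, s}" by auto
    with nc show False by simp
  qed
  have "p \<noteq> s"
  proof
    assume "p = s" then have "{p, q, s} = {q, s}" by auto
    with nc show False by simp
  qed
  define r1 where "r1 = norm (p - q)"
  define r2 where "r2 = norm (p - s)"
  have r1: "r1 > 0" using \<open>p \<noteq> q\<close> by (simp add: r1_def)
  have r2: "r2 > 0" using \<open>p \<noteq> s\<close> by (simp add: r2_def)
  have "cross3 p (((mp * mq) / r1 ^ 3) *\<^sub>R (q - p) + ((mp * ms) / r2 ^ 3) *\<^sub>R (s - p))
      = ((mp * mq) / r1 ^ 3) *\<^sub>R cross3 p q + ((mp * ms) / r2 ^ 3) *\<^sub>R cross3 p s"
    by (simp add: cross_add_right cross_mult_right Cross3.right_diff_distrib)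
  also have "\<dots> = (mq * ms * (1 / r1 ^ 3 - 1 / r2 ^ 3)) *\<^sub>R cross3 q s"
    using mp by (simp add: pq ps scaleR_left_diff_distrib algebra_simps)
  finally have eq: "cross3 p (((mp * mq) / r1 ^ 3) *\<^sub>R (q - p) + ((mp * ms) / r2 ^ 3) *\<^sub>R (s - p))
      = (mq * ms * (1 / r1 ^ 3 - 1 / r2 ^ 3)) *\<^sub>R cross3 q s" .
  have "(mq * ms * (1 / r1 ^ 3 - 1 / r2 ^ 3)) *\<^sub>R cross3 q s = 0 \<longleftrightarrow> 1 / r1 ^ 3 = 1 / r2 ^ 3"
    using qs mq ms by simp
  also have "\<dots> \<longleftrightarrow> r1 = r2"
    using r1 r2 by (metis less_eq_real_def power_eq_iff_eq_base zero_less_numeral inverse_eq_divide inverse_inverse_eq)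
  finally show ?thesis using eq by (simp add: r1_def r2_def)
qed

theorem mainTheorem11:
  fixes m :: "nat \<Rightarrow> real" and a :: "nat \<Rightarrow> real^3"
  assumes "m 1 > 0" "m 2 > 0" "m 3 > 0"
    and "m 1 + m 2 + m 3 = 1"
    and "m 1 *\<^sub>R a 1 + m 2 *\<^sub>R a 2 + m 3 *\<^sub>R a 3 = 0"
    and "\<not> collinear {a 1, a 2, a 3}"
  shows "(torque m a 1 = 0 \<longleftrightarrow> rdist a 1 2 = rdist a 1 3)
       \<and> ((torque m a 1 = 0 \<and> torque m a 2 = 0 \<and> torque m a 3 = 0)
            \<longleftrightarrow> (rdist a 1 2 = rdist a 1 3 \<and> rdist a 1 2 = rdist a 2 3))"
proof -
  have s1: "{1,2,3} - {1::nat} = {2,3}" and s2: "{1,2,3} - {2::nat} = {1,3}"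
    and s3: "{1,2,3} - {3::nat} = {1,2}" by auto
  have t1: "torque m a 1 = 0 \<longleftrightarrow> norm (a 1 - a 2) = norm (a 1 - a 3)"
  proof -
    have "torque m a 1 = cross3 (a 1) (((m 1 * m 2) / norm (a 1 - a 2) ^ 3) *\<^sub>R (a 2 - a 1) + ((m 1 * m 3) / norm (a 1 - a 3) ^ 3) *\<^sub>R (a 3 - a 1))"
      unfolding torque_def rdist_def s1 by (subst sum.insert) auto
    then show ?thesis using key[OF assms(1,2,3,5,6)] by simp
  qed
  have t2: "torque m a 2 = 0 \<longleftrightarrow> norm (a 2 - a 1) = norm (a 2 - a 3)"
  proof -
    have c: "m 2 *\<^sub>R a 2 + m 1 *\<^sub>R a 1 + m 3 *\<^sub>R a 3 = 0"
      using assms(5) by (simp add: add_ac)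
    have n: "\<not> collinear {a 2, a 1, a 3}" proof -
      have "{a 2, a 1, a 3} = {a 1, a 2, a 3}" by blast
      then show ?thesis using assms(6) by simp
    qed
    have "torque m a 2 = cross3 (a 2) (((m 2 * m 1) / norm (a 2 - a 1) ^ 3) *\<^sub>R (a 1 - a 2) + ((m 2 * m 3) / norm (a 2 - a 3) ^ 3) *\<^sub>R (a 3 - a 2))"
      unfolding torque_def rdist_def s2 by (subst sum.insert) auto
    then show ?thesis using key[OF assms(2,1,3) c n] by simp
  qed
  have t3: "torque m a 3 = 0 \<longleftrightarrow> norm (a 3 - a 1) = norm (a 3 - a 2)"
  proof -
    have c: "m 3 *\<^sub>R a 3 + m 1 *\<^sub>R a 1 + m 2 *\<^sub>R a 2 = 0"
      using assms(5) by (simp add: add_ac)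
    have n: "\<not> collinear {a 3, a 1, a 2}" proof -
      have "{a 3, a 1, a 2} = {a 1, a 2, a 3}" by blast
      then show ?thesis using assms(6) by simp
    qed
    have "torque m a 3 = cross3 (a 3) (((m 3 * m 1) / norm (a 3 - a 1) ^ 3) *\<^sub>R (a 1 - a 3) + ((m 3 * m 2) / norm (a 3 - a 2) ^ 3) *\<^sub>R (a 2 - a 3))"
      unfolding torque_def rdist_def s3 by (subst sum.insert) auto
    then show ?thesis using key[OF assms(3,1,2) c n] by simp
  qed
  have e1: "norm (a 2 - a 1) = norm (a 1 - a 2)" "norm (a 3 - a 1) = norm (a 1 - a 3)"
    "norm (a 3 - a 2) = norm (a 2 - a 3)" by (simp_all add: norm_minus_commute)
  have gen: "\<And>T1 T2 T3 x y z :: _. (T1 \<longleftrightarrow> (x::real) = y) \<Longrightarrow> (T2 \<longleftrightarrow> x = z) \<Longrightarrow> (T3 \<longleftrightarrow> y = z)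
     \<Longrightarrow> (T1 \<longleftrightarrow> x = y) \<and> ((T1 \<and> T2 \<and> T3) \<longleftrightarrow> (x = y \<and> x = z))" by blast
  have t2': "torque m a 2 = 0 \<longleftrightarrow> norm (a 1 - a 2) = norm (a 2 - a 3)" using t2 e1 by simp
  have t3': "torque m a 3 = 0 \<longleftrightarrow> norm (a 1 - a 3) = norm (a 2 - a 3)" using t3 e1 by simp
  show ?thesis unfolding rdist_def by (rule gen[OF t1 t2' t3'])
qed

end
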